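(* Let $r$ be an odd prime and $\mu_i=(-1)^iA_r^{i(i+2)}$. If $0\le i<j\le\frac{r-3}{2}$, then $\mu_i^2-\mu_j^2\sim\mu_i-\mu_j\sim 1-A_r^2$.
   Context: $\alpha_r=e^{2\pi i/(4r)}$, $A_r=\alpha_r^2$; $\mathcal{O}_r=\mathbb{Z}[A_r]$ if $r\equiv-1\pmod 4$ and $\mathcal{O}_r=\mathbb{Z}[\alpha_r]$ if $r\equiv 1\pmod 4$. $a\sim b$ means $a/b$ is a unit of $\mathcal{O}_r$. *)

theory Defs
  imports Complex_Main "HOL-Computational_Algebra.Polynomial"
begin

definition alpha_r :: "nat \<Rightarrow> complex" where
  "alpha_r r = cis (2 * pi / (4 * real r))"

definition A_r :: "nat \<Rightarrow> complex" where
  "A_r r = (alpha_r r)^2"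

definition int_adjoin :: "complex \<Rightarrow> complex set" where
  "int_adjoin z = {poly (map_poly of_int p) z | p :: int poly. True}"

definition O_r :: "nat \<Rightarrow> complex set" where
  "O_r r = (if r mod 4 = 3 then int_adjoin (A_r r) else int_adjoin (alpha_r r))"

text \<open>a ~ b : a/b is a unit of O_r, i.e. b is nonzero, a/b is nonzero, a/b and b/a lie in O_r.\<close>
definition assoc_r :: "nat \<Rightarrow> complex \<Rightarrow> complex \<Rightarrow> bool" where
  "assoc_r r a b \<longleftrightarrow> b \<noteq> 0 \<and> a \<noteq> 0 \<and> a / b \<in> O_r r \<and> b / a \<in> O_r r"

definition mu_r :: "nat \<Rightarrow> nat \<Rightarrow> complex" where
  "mu_r r i = (-1)^i * (A_r r)^(i * (i + 2))"

end

theory Submission imports Defs "HOL-Number_Theory.Number_Theory" begin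
lemma mp_mult: "map_poly (of_int::int\<Rightarrow>complex) (p*q) = map_poly of_int p * map_poly of_int q"
  by (simp add: poly_eq_iff coeff_mult coeff_map_poly)
lemma mp_add: "map_poly (of_int::int\<Rightarrow>complex) (p+q) = map_poly of_int p + map_poly of_int q"
  by (simp add: poly_eq_iff coeff_map_poly)
lemma mp_minus: "map_poly (of_int::int\<Rightarrow>complex) (-p) = - map_poly of_int p"
  by (simp add: poly_eq_iff coeff_map_poly)
lemma mp_const: "map_poly (of_int::int\<Rightarrow>complex) [:c:] = [:of_int c:]"
  by (simp add: poly_eq_iff coeff_map_poly coeff_pCons split: nat.split)
lemma mp_x: "map_poly (of_int::int\<Rightarrow>complex) [:0,1:] = [:0,1:]"
  by (simp add: poly_eq_iff coeff_map_poly coeff_pCons split: nat.split)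

lemma ia_add: "x \<in> int_adjoin z \<Longrightarrow> y \<in> int_adjoin z \<Longrightarrow> x + y \<in> int_adjoin z"
  unfolding int_adjoin_def
proof clarify
  fix p q :: "int poly"
  show "\<exists>s. poly (map_poly of_int p) z + poly (map_poly of_int q) z = poly (map_poly of_int s) z \<and> True"
    by (rule exI[of _ "p+q"]) (simp add: mp_add)
qed
lemma ia_mult: "x \<in> int_adjoin z \<Longrightarrow> y \<in> int_adjoin z \<Longrightarrow> x * y \<in> int_adjoin z"
  unfolding int_adjoin_def
proof clarify
  fix p q :: "int poly"
  show "\<exists>s. poly (map_poly of_int p) z * poly (map_poly of_int q) z = poly (map_poly of_int s) z \<and> True"
    by (rule exI[of _ "p*q"]) (simp add: mp_mult)
qed
lemma ia_const: "of_int c \<in> int_adjoin z"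
  unfolding int_adjoin_def
  by (rule CollectI, rule exI[of _ "[:c:]"]) (simp add: mp_const)
lemma ia_z: "z \<in> int_adjoin z"
  unfolding int_adjoin_def
  by (rule CollectI, rule exI[of _ "[:0,1:]"]) (simp add: mp_x)

lemma O_add: "x \<in> O_r r \<Longrightarrow> y \<in> O_r r \<Longrightarrow> x + y \<in> O_r r"
  unfolding O_r_def by (auto intro: ia_add)
lemma O_mult: "x \<in> O_r r \<Longrightarrow> y \<in> O_r r \<Longrightarrow> x * y \<in> O_r r"
  unfolding O_r_def by (auto intro: ia_mult)
lemma O_const: "of_int c \<in> O_r r"
  unfolding O_r_def by (auto intro: ia_const)
lemma O_A: "A_r r \<in> O_r r"
  unfolding O_r_def A_r_def by (auto intro: ia_z ia_mult simp: power2_eq_square)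
lemma O_B: "- A_r r \<in> O_r r"
  using O_mult[OF O_const[of "-1"] O_A] by simp
lemma O_pow: fixes n :: nat shows "x \<in> O_r r \<Longrightarrow> x ^ n \<in> O_r r"
  by (induct n) (auto intro: O_mult O_const[of 1, simplified])
lemma O_sum: fixes c :: nat shows "(\<And>t. t < c \<Longrightarrow> f t \<in> O_r r) \<Longrightarrow> (\<Sum>t<c. f t) \<in> O_r r"
  by (induction c) (auto intro: O_add O_const[of 0, simplified])

lemma A_eq: "r > 0 \<Longrightarrow> A_r r = cis (pi / real r)"
proof -
  assume "r > 0"
  have "real 2 * (2 * pi / (4 * real r)) = pi / real r" by simp
  then show ?thesis unfolding A_r_def alpha_r_def DeMoivre by metis
qed

lemma B_pow_r: assumes "r > 0" "odd r" shows "(- A_r r) ^ r = 1"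
proof -
  have "A_r r ^ r = -1" using assms by (simp add: A_eq DeMoivre)
  have "(- A_r r)^r = (-1)^r * A_r r ^ r" by (rule power_minus)
  also have "\<dots> = (-1) * (-1)"
  proof -
    have "(-1::complex)^r = -1" using assms(2) by (rule neg_one_odd_power)
    then show ?thesis using \<open>A_r r ^ r = -1\<close> by (simp only:)
  qed
  finally show ?thesis by simp
qed

lemma B_pow_ne1: assumes "r > 0" "odd r" "\<not> r dvd k" shows "(- A_r r) ^ k \<noteq> 1"
proof
  assume "(- A_r r) ^ k = 1"
  then have "((- A_r r) ^ k)^2 = 1" by simp
  then have "A_r r ^ (2*k) = 1" by (simp add: power_mult_distrib power_mult[symmetric] mult.commute)
  then have "cis (real (2*k) * (pi / real r)) = 1" using assms by (simp add: A_eq DeMoivre)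
  then have "cos (real (2*k) * (pi / real r)) = 1" by (metis cis.sel(1) one_complex.sel(1))
  then obtain n :: int where n: "real (2*k) * (pi / real r) = n * 2 * pi" by (auto simp: cos_one_2pi_int)
  then have "real k = n * real r" using assms by (simp add: field_simps)
  then have "int k = n * int r" by (metis of_int_eq_iff of_int_mult of_int_of_nat_eq)
  then have "int r dvd int k" by simp
  then show False using assms by simp
qed

lemma B_pow_mod: assumes "r > 0" "odd r" shows "(- A_r r) ^ n = (- A_r r) ^ (n mod r)"
proof -
  have "n = r * (n div r) + n mod r" by simp
  then have "(- A_r r) ^ n = ((- A_r r) ^ r) ^ (n div r) * (- A_r r) ^ (n mod r)"
    by (metis power_add power_mult)
  thus ?thesis using B_pow_r[OF assms] by simp
qed

lemma ratio_in: 
  assumes "prime r" "odd r" "\<not> r dvd k" "\<not> r dvd m"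
  shows "((- A_r r)^s * (1 - (- A_r r)^k)) / ((- A_r r)^t * (1 - (- A_r r)^m)) \<in> O_r r"
proof -
  define B where "B = - A_r r"
  have r0: "r > 0" using assms prime_gt_0_nat by blast
  define c where "c = m^(r-2) * k"
  have "[m^(r-1) = 1] (mod r)" using fermat_theorem assms by blast
  then have "[m^(r-1) * k = 1 * k] (mod r)" by (rule cong_mult) simp
  moreover have "r - 1 = Suc (r - 2)" using prime_ge_2_nat[OF assms(1)] by simp
  ultimately have "[m * c = k] (mod r)" unfolding c_def by (simp add: mult.assoc)
  then have "(m*c) mod r = k mod r" by (simp add: cong_def)
  then have Bk: "B^k = (B^m)^c" using B_pow_mod[OF r0 assms(2)] unfolding B_def
    by (metis power_mult)
  have ne: "1 - B^m \<noteq> 0" using B_pow_ne1[OF r0 assms(2) assms(4)] unfolding B_def by simp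
  have geo: "1 - (B^m)^c = (1 - B^m) * (\<Sum>t<c. (B^m)^t)"
    by (induction c) (simp_all add: algebra_simps)
  have Bt: "B^t * B^((r-1)*t) = 1"
  proof -
    have e: "t + (r-1)*t = r*t" using r0 by (cases r) auto
    have "B^t * B^((r-1)*t) = B^(r*t)" by (metis power_add e)
    also have "\<dots> = 1" using B_pow_r[OF r0 assms(2)] unfolding B_def by (simp add: power_mult)
    finally show ?thesis .
  qed
  have "(B^s * (1 - B^k)) / (B^t * (1 - B^m)) = B^s * B^((r-1)*t) * (\<Sum>t<c. (B^m)^t)"
  proof -
    have "B^t \<noteq> 0"
    proof
      assume "B^t = 0" then show False using Bt by (metis mult_zero_left zero_neq_one)
    qed
    define S where "S = (\<Sum>t<c. (B^m)^t)"
    define X where "X = B^((r-1)*t)"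
    have "(B^s * X * S) * (B^t * (1 - B^m)) = B^s * (B^t * X) * ((1 - B^m) * S)"
      by (simp only: ac_simps)
    also have "\<dots> = B^s * (1 - B^k)" using Bt unfolding X_def S_def Bk geo by simp
    finally have eq: "(B^s * X * S) * (B^t * (1 - B^m)) = B^s * (1 - B^k)" .
    have nz: "B^t * (1 - B^m) \<noteq> 0" using ne \<open>B^t \<noteq> 0\<close> by simp
    have "(B^s * (1 - B^k)) / (B^t * (1 - B^m)) = B^s * X * S"
      unfolding eq[symmetric] using nz by (rule nonzero_mult_div_cancel_right)
    then show ?thesis unfolding X_def S_def .
  qed
  moreover have "B^s * B^((r-1)*t) * (\<Sum>t<c. (B^m)^t) \<in> O_r r"
  proof -
    have b: "B \<in> O_r r" unfolding B_def by (rule O_B)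
    have "(\<Sum>t<c. (B^m)^t) \<in> O_r r" by (rule O_sum, rule O_pow, rule O_pow, rule b)
    moreover have "B^s \<in> O_r r" "B^((r-1)*t) \<in> O_r r" using b by (auto intro: O_pow)
    ultimately show ?thesis by (auto intro: O_mult)
  qed
  ultimately show ?thesis unfolding B_def by simp
qed

lemma assoc_gen:
  assumes "prime r" "odd r" "\<not> r dvd k" "\<not> r dvd m"
  shows "assoc_r r ((- A_r r)^s * (1 - (- A_r r)^k)) ((- A_r r)^t * (1 - (- A_r r)^m))"
proof -
  have r0: "r > 0" using assms prime_gt_0_nat by blast
  have Bnz: "(- A_r r) \<noteq> 0" using B_pow_r[OF r0 assms(2)] r0 by (metis power_0_left zero_neq_one neq0_conv)
  have n1: "1 - (- A_r r)^k \<noteq> 0" using B_pow_ne1[OF r0 assms(2) assms(3)] by simp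
  have n2: "1 - (- A_r r)^m \<noteq> 0" using B_pow_ne1[OF r0 assms(2) assms(4)] by simp
  show ?thesis unfolding assoc_r_def
    using Bnz n1 n2 ratio_in[OF assms(1,2,3,4)] ratio_in[OF assms(1,2,4,3)] by simp
qed

lemma mu_eq: "mu_r r i = (- A_r r)^(i*(i+2))"
proof -
  have "even (i*(i+2)) = even i" by simp
  then have "(-1::complex)^(i*(i+2)) = (-1)^i"
    by (cases "even i") (simp_all add: neg_one_even_power neg_one_odd_power)
  then show ?thesis unfolding mu_r_def by (simp add: power_minus[of "A_r r"])
qed

theorem lemma7p1:
  fixes r i j :: nat
  assumes "prime r" and "odd r" and "i < j" and "j \<le> (r - 3) div 2"
  shows "assoc_r r ((mu_r r i)^2 - (mu_r r j)^2) (mu_r r i - mu_r r j)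
       \<and> assoc_r r (mu_r r i - mu_r r j) (1 - (A_r r)^2)"
proof -
  define B where "B = - A_r r"
  define a where "a = i*(i+2)"
  define d where "d = (j-i)*(j+i+2)"
  have r2: "r > 2" using assms(1,2) prime_ge_2_nat[OF assms(1)] by (metis le_neq_implies_less even_numeral)
  have r2': "\<not> r dvd 2" using r2 by (auto dest: dvd_imp_le)
  have "j*(j+2) = a + d"
  proof -
    obtain e where e: "j = i + e" using assms(3) by (metis less_imp_add_positive)
    show ?thesis unfolding a_def d_def e by (simp add: algebra_simps)
  qed
  then have muj: "mu_r r j = B^a * B^d" unfolding mu_eq B_def by (simp add: power_add)
  have mui: "mu_r r i = B^a" unfolding mu_eq B_def a_def ..
  have h1: "\<not> r dvd (j - i)" using assms(3,4) r2 by (auto dest: dvd_imp_le)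
  have h2: "\<not> r dvd (j + i + 2)" using assms(3,4) r2 by (auto dest: dvd_imp_le)
  have hd: "\<not> r dvd d" unfolding d_def using h1 h2 assms(1) prime_dvd_mult_iff by blast
  have hd2: "\<not> r dvd (2*d)" using hd r2' assms(1) prime_dvd_mult_iff by blast
  have e1: "(mu_r r i)^2 - (mu_r r j)^2 = B^(2*a) * (1 - B^(2*d))"
    unfolding mui muj by (simp add: algebra_simps power_mult_distrib power_mult[symmetric] mult.commute)
  have e2: "mu_r r i - mu_r r j = B^a * (1 - B^d)" unfolding mui muj by (simp add: algebra_simps)
  have e3: "1 - (A_r r)^2 = B^0 * (1 - B^2)" unfolding B_def by simp
  have c1: "assoc_r r (B^(2*a) * (1 - B^(2*d))) (B^a * (1 - B^d))"
    unfolding B_def by (rule assoc_gen[OF assms(1,2) hd2 hd])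
  have c2: "assoc_r r (B^a * (1 - B^d)) (B^0 * (1 - B^2))"
    unfolding B_def by (rule assoc_gen[OF assms(1,2) hd r2'])
  show ?thesis unfolding e1 e2 e3 using c1 c2 by (rule conjI)
qed
end
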